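(* Let $Q=(\mathcal S,|\cdot|,q)$ be a quasi-reversible queueing system satisfying Assumption 1 with finite $\mathcal S$, let $\Pi$ be a stationary measure of $Q$, and let $r:\mathcal S\to\mathbb R$, $R:\mathcal S\times\mathcal S\to\mathbb R$ be reward functions. For an admission policy $\gamma$ let $G_\gamma=\sum_{s}\Pi_\gamma(s)r(s)+\sum_{s,t}\Pi_\gamma(s)q_\gamma(s,t)R(s,t)$, where $\Pi_\gamma$ is the unique stationary distribution of $q_\gamma$. Then there exists a Ferrers set $\mathcal A\subseteq|\mathcal S|$ such that the deterministic policy $\gamma^{\mathcal A}_i(s)=\mathbf 1\{|s|+e_i\in\mathcal A\}$ (which is balanced, with balance function $\mathbf 1_{\mathcal A}$) satisfies $G_{\gamma^{\mathcal A}}\ge G_\gamma$ for every balanced admission policy $\gamma$. Equivalently, the function $\Gamma_{\mathcal A}(x)=\frac1Z\mathbf 1\{x\in\mathcal A\}$, $Z=\sum_{s:|s|\in\mathcal A}\Pi(s)$, is an optimal solution of the linear program: maximize over $\Gamma:|\mathcal S|\to\mathbb R$ $$\sum_{s\in\mathcal S}\Pi(s)\Gamma(|s|)r(s)+\sum_{s\in\mathcal S}\sum_{i=1}^n\sum_{t\in\mathcal S_{|s|+e_i}}\Pi(s)\Gamma(|s|+e_i)q(s,t)R(s,t)+\sum_{s\in\mathcal S}\sum_{t\notin\bigcup_i\mathcal S_{|s|+e_i}}\Pi(s)\Gamma(|s|)q(s,t)R(s,t)$$ subject to $\Gamma(x)\ge0$ for all $x$, $\Gamma(x)\ge\Gamma(x+e_i)$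 whenever $x,x+e_i\in|\mathcal S|$, and $\sum_{s\in\mathcal S}\Pi(s)\Gamma(|s|)=1$.
   Context: $e_i$ is the $i$-th unit vector; $\le$ componentwise; a Ferrers set $\mathcal X\subseteq\mathbb N^n$ contains $0$ and every $y\in\mathbb N^n$ with $y\le x$ for some $x\in\mathcal X$. Queueing system $Q=(\mathcal S,|\cdot|,q)$: $\mathcal S$ countable, $|\cdot|:\mathcal S\to\mathbb N^n$, $|\mathcal S|$ Ferrers, unique $\varnothing$ with $|\varnothing|=0$, $q$ a CTMC rate kernel with $q(s,t)=0$ unless $t\in\mathcal S_{|s|}\cup\bigcup_i(\mathcal S_{|s|+e_i}\cup\mathcal S_{|s|-e_i})$, $\mathcal S_x=\{s:|s|=x\}$. Assumption 1: there is $\mathcal S_{\mathrm{rec}}$ with (1) every $s\in\mathcal S_{\mathrm{rec}}$ reachable from $\varnothing$ by a positive-rate path along which $|\cdot|$ is non-decreasing; (2) no $s\notin\mathcal S_{\mathrm{rec}}$ reachable from $\varnothing$; (3) from every $s$ a positive-rate path to $\varnothing$ along which $|\cdot|$ is non-increasing; (4) $|\mathcal S_{\mathrm{rec}}|$ Ferrers. Quasi-reversibility: stationary measures satisfy $\Pi(s)\sum_{t\in\mathcal S_{|s|+e_i}}q(s,t)=\sum_{t\in\mathcal S_{|s|+e_i}}\Pi(t)q(t,s)$ for all $s,i$. An admission policy is $\gamma:\mathcal S\to[0,1]^n$; $q_\gamma(s,t)=q(s,t)\gamma_i(s)$ if $t\in\mathcal S_{|s|+e_i}$, $q_\gamma(s,t)=q(s,t)$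 otherwise. A policy is balanced if it is microstate-independent ($\gamma(s)=\gamma(t)$ whenever $|s|=|t|$, so it is viewed as a function of $x=|s|$) and there exists $\Gamma:|\mathcal S|\to\mathbb R_{\ge0}$ with $\Gamma(0)=1$ and $\Gamma(x)\gamma_i(x)=\Gamma(x+e_i)$ whenever $x,x+e_i\in|\mathcal S|$. *)

theory Defs
  imports Complex_Main
begin

text \<open>Vectors of \<open>\<nat>\<^sup>n\<close> are represented as functions \<open>nat \<Rightarrow> nat\<close> vanishing outside
  \<open>{..<n}\<close>; the order is the componentwise (pointwise) order on functions.\<close>

definition vecs :: "nat \<Rightarrow> (nat \<Rightarrow> nat) set" where
  "vecs n = {x. \<forall>j\<ge>n. x j = 0}"

definition zvec :: "nat \<Rightarrow> nat" where
  "zvec = (\<lambda>_. 0)"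

definition adde :: "(nat \<Rightarrow> nat) \<Rightarrow> nat \<Rightarrow> (nat \<Rightarrow> nat)" where
  "adde x i = x(i := Suc (x i))"

definition Ferrers :: "nat \<Rightarrow> (nat \<Rightarrow> nat) set \<Rightarrow> bool" where
  "Ferrers n X \<longleftrightarrow> X \<subseteq> vecs n \<and> zvec \<in> X \<and> (\<forall>x\<in>X. \<forall>y. y \<le> x \<longrightarrow> y \<in> X)"

definition queueing_system ::
  "nat \<Rightarrow> 'a set \<Rightarrow> ('a \<Rightarrow> nat \<Rightarrow> nat) \<Rightarrow> ('a \<Rightarrow> 'a \<Rightarrow> real) \<Rightarrow> 'a \<Rightarrow> bool" where
  "queueing_system n S sz q e0 \<longleftrightarrow>
     (\<forall>s\<in>S. sz s \<in> vecs n) \<and>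
     Ferrers n (sz ` S) \<and>
     e0 \<in> S \<and> sz e0 = zvec \<and> (\<forall>s\<in>S. sz s = zvec \<longrightarrow> s = e0) \<and>
     (\<forall>s\<in>S. \<forall>t\<in>S. s \<noteq> t \<longrightarrow> q s t \<ge> 0) \<and>
     (\<forall>s\<in>S. \<forall>t\<in>S. q s t \<noteq> 0 \<longrightarrow>
        sz t = sz s \<or> (\<exists>i<n. sz t = adde (sz s) i \<or> sz s = adde (sz t) i))"

definition path_from_to ::
  "'a set \<Rightarrow> ('a \<Rightarrow> 'a \<Rightarrow> real) \<Rightarrow> ('a \<Rightarrow> 'a \<Rightarrow> bool) \<Rightarrow> 'a \<Rightarrow> 'a \<Rightarrow> bool" where
  "path_from_to S q P s t \<longleftrightarrow>
     (\<exists>xs. xs \<noteq> [] \<and> hd xs = s \<and> last xs = t \<and> set xs \<subseteq> S \<and>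
        (\<forall>k. Suc k < length xs \<longrightarrow> q (xs ! k) (xs ! Suc k) > 0 \<and> P (xs ! k) (xs ! Suc k)))"

definition assumption1 ::
  "nat \<Rightarrow> 'a set \<Rightarrow> ('a \<Rightarrow> nat \<Rightarrow> nat) \<Rightarrow> ('a \<Rightarrow> 'a \<Rightarrow> real) \<Rightarrow> 'a \<Rightarrow> bool" where
  "assumption1 n S sz q e0 \<longleftrightarrow>
     (\<exists>Srec \<subseteq> S.
        (\<forall>s\<in>Srec. path_from_to S q (\<lambda>u v. sz u \<le> sz v) e0 s) \<and>
        (\<forall>s\<in>S - Srec. \<not> path_from_to S q (\<lambda>_ _. True) e0 s) \<and>
        (\<forall>s\<in>S. path_from_to S q (\<lambda>u v. sz v \<le> sz u) s e0) \<and>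
        Ferrers n (sz ` Srec))"

definition stationary_measure :: "'a set \<Rightarrow> ('a \<Rightarrow> 'a \<Rightarrow> real) \<Rightarrow> ('a \<Rightarrow> real) \<Rightarrow> bool" where
  "stationary_measure S k P \<longleftrightarrow>
     (\<forall>s\<in>S. P s \<ge> 0) \<and> (\<exists>s\<in>S. P s \<noteq> 0) \<and>
     (\<forall>s\<in>S. P s * (\<Sum>t\<in>S. k s t) = (\<Sum>t\<in>S. P t * k t s))"

definition stationary_distribution :: "'a set \<Rightarrow> ('a \<Rightarrow> 'a \<Rightarrow> real) \<Rightarrow> ('a \<Rightarrow> real) \<Rightarrow> bool" where
  "stationary_distribution S k P \<longleftrightarrow>
     (\<forall>s\<in>S. P s \<ge> 0) \<and> (\<Sum>s\<in>S. P s) = 1 \<and>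
     (\<forall>s\<in>S. P s * (\<Sum>t\<in>S. k s t) = (\<Sum>t\<in>S. P t * k t s))"

definition level :: "'a set \<Rightarrow> ('a \<Rightarrow> nat \<Rightarrow> nat) \<Rightarrow> (nat \<Rightarrow> nat) \<Rightarrow> 'a set" where
  "level S sz x = {s\<in>S. sz s = x}"

definition quasi_reversible ::
  "nat \<Rightarrow> 'a set \<Rightarrow> ('a \<Rightarrow> nat \<Rightarrow> nat) \<Rightarrow> ('a \<Rightarrow> 'a \<Rightarrow> real) \<Rightarrow> bool" where
  "quasi_reversible n S sz q \<longleftrightarrow>
     (\<forall>P. stationary_measure S q P \<longrightarrow>
        (\<forall>s\<in>S. \<forall>i<n.
           P s * (\<Sum>t\<in>level S sz (adde (sz s) i). q s t)
           = (\<Sum>t\<in>level S sz (adde (sz s) i). P t * q t s)))"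

definition admission_policy :: "nat \<Rightarrow> 'a set \<Rightarrow> ('a \<Rightarrow> nat \<Rightarrow> real) \<Rightarrow> bool" where
  "admission_policy n S \<gamma> \<longleftrightarrow> (\<forall>s\<in>S. \<forall>i<n. 0 \<le> \<gamma> s i \<and> \<gamma> s i \<le> 1)"

definition qpol ::
  "nat \<Rightarrow> ('a \<Rightarrow> nat \<Rightarrow> nat) \<Rightarrow> ('a \<Rightarrow> 'a \<Rightarrow> real) \<Rightarrow> ('a \<Rightarrow> nat \<Rightarrow> real) \<Rightarrow> 'a \<Rightarrow> 'a \<Rightarrow> real" where
  "qpol n sz q \<gamma> s t =
     (if \<exists>i<n. sz t = adde (sz s) i
      then q s t * \<gamma> s (THE i. i < n \<and> sz t = adde (sz s) i)
      else q s t)"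

definition balanced :: "nat \<Rightarrow> 'a set \<Rightarrow> ('a \<Rightarrow> nat \<Rightarrow> nat) \<Rightarrow> ('a \<Rightarrow> nat \<Rightarrow> real) \<Rightarrow> bool" where
  "balanced n S sz \<gamma> \<longleftrightarrow>
     (\<forall>s\<in>S. \<forall>t\<in>S. sz s = sz t \<longrightarrow> (\<forall>i<n. \<gamma> s i = \<gamma> t i)) \<and>
     (\<exists>\<Gamma> :: (nat \<Rightarrow> nat) \<Rightarrow> real.
        (\<forall>x\<in>sz ` S. \<Gamma> x \<ge> 0) \<and> \<Gamma> zvec = 1 \<and>
        (\<forall>s\<in>S. \<forall>i<n. adde (sz s) i \<in> sz ` S \<longrightarrow> \<Gamma> (sz s) * \<gamma> s i = \<Gamma> (adde (sz s) i)))"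

definition det_policy :: "('a \<Rightarrow> nat \<Rightarrow> nat) \<Rightarrow> (nat \<Rightarrow> nat) set \<Rightarrow> 'a \<Rightarrow> nat \<Rightarrow> real" where
  "det_policy sz A s i = (if adde (sz s) i \<in> A then 1 else 0)"

definition reward :: "'a set \<Rightarrow> ('a \<Rightarrow> 'a \<Rightarrow> real) \<Rightarrow> ('a \<Rightarrow> real) \<Rightarrow> ('a \<Rightarrow> 'a \<Rightarrow> real)
    \<Rightarrow> ('a \<Rightarrow> real) \<Rightarrow> real" where
  "reward S k r R P = (\<Sum>s\<in>S. P s * r s) + (\<Sum>s\<in>S. \<Sum>t\<in>S. P s * k s t * R s t)"

definition lp_objective ::
  "nat \<Rightarrow> 'a set \<Rightarrow> ('a \<Rightarrow> nat \<Rightarrow> nat) \<Rightarrow> ('a \<Rightarrow> 'a \<Rightarrow> real) \<Rightarrow> ('a \<Rightarrow> real)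
    \<Rightarrow> ('a \<Rightarrow> real) \<Rightarrow> ('a \<Rightarrow> 'a \<Rightarrow> real) \<Rightarrow> ((nat \<Rightarrow> nat) \<Rightarrow> real) \<Rightarrow> real" where
  "lp_objective n S sz q Pi r R \<Gamma> =
     (\<Sum>s\<in>S. Pi s * \<Gamma> (sz s) * r s)
     + (\<Sum>s\<in>S. \<Sum>i<n. \<Sum>t\<in>level S sz (adde (sz s) i).
          Pi s * \<Gamma> (adde (sz s) i) * q s t * R s t)
     + (\<Sum>s\<in>S. \<Sum>t\<in>{t\<in>S. \<not> (\<exists>i<n. sz t = adde (sz s) i)}.
          Pi s * \<Gamma> (sz s) * q s t * R s t)"

definition lp_feasible ::
  "nat \<Rightarrow> 'a set \<Rightarrow> ('a \<Rightarrow> nat \<Rightarrow> nat) \<Rightarrow> ('a \<Rightarrow> real) \<Rightarrow> ((nat \<Rightarrow> nat) \<Rightarrow> real) \<Rightarrow> bool" where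
  "lp_feasible n S sz Pi \<Gamma> \<longleftrightarrow>
     (\<forall>x\<in>sz ` S. \<Gamma> x \<ge> 0) \<and>
     (\<forall>x\<in>sz ` S. \<forall>i<n. adde x i \<in> sz ` S \<longrightarrow> \<Gamma> x \<ge> \<Gamma> (adde x i)) \<and>
     (\<Sum>s\<in>S. Pi s * \<Gamma> (sz s)) = 1"

definition GammaA :: "'a set \<Rightarrow> ('a \<Rightarrow> nat \<Rightarrow> nat) \<Rightarrow> ('a \<Rightarrow> real) \<Rightarrow> (nat \<Rightarrow> nat) set
    \<Rightarrow> (nat \<Rightarrow> nat) \<Rightarrow> real" where
  "GammaA S sz Pi A x = (if x \<in> A then 1 / (\<Sum>s\<in>{s\<in>S. sz s \<in> A}. Pi s) else 0)"

end

theory Submission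
  imports Defs
begin


definition bal :: "'a set \<Rightarrow> ('a \<Rightarrow> 'a \<Rightarrow> real) \<Rightarrow> ('a \<Rightarrow> real) \<Rightarrow> bool" where
  "bal S k D \<longleftrightarrow> (\<forall>s\<in>S. D s * (\<Sum>t\<in>S. k s t) = (\<Sum>t\<in>S. D t * k t s))"

lemma pos_step:
  assumes fin: "finite S" and kn: "\<forall>s\<in>S. \<forall>t\<in>S. s \<noteq> t \<longrightarrow> k s t \<ge> 0"
    and Dn: "\<forall>s\<in>S. D s \<ge> 0" and b: "bal S k D"
    and a: "a \<in> S" "c \<in> S" "D a > 0" "k a c > 0"
  shows "D c > 0"
proof (cases "a = c")
  case True thus ?thesis using a by simp
next
  case False
  have e: "D c * (\<Sum>t\<in>S. k c t) = (\<Sum>t\<in>S. D t * k t c)" using b a unfolding bal_def by blast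
  have e1: "(\<Sum>t\<in>S. k c t) = k c c + (\<Sum>t\<in>S-{c}. k c t)" using sum.remove[OF fin a(2)] by simp
  have e2: "(\<Sum>t\<in>S. D t * k t c) = D c * k c c + (\<Sum>t\<in>S-{c}. D t * k t c)" using sum.remove[OF fin a(2)] by simp
  have "D a * k a c \<le> (\<Sum>t\<in>S-{c}. D t * k t c)"
    by (rule member_le_sum) (use False a kn Dn fin in auto)
  moreover have "D a * k a c > 0" using a by simp
  ultimately have "D c * (\<Sum>t\<in>S-{c}. k c t) > 0" using e e1 e2 by (simp add: algebra_simps)
  hence "D c \<noteq> 0" by auto
  thus ?thesis using Dn a by force
qed

lemma list_pos:
  assumes fin: "finite S" and kn: "\<forall>s\<in>S. \<forall>t\<in>S. s \<noteq> t \<longrightarrow> k s t \<ge> 0"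
    and Dn: "\<forall>s\<in>S. D s \<ge> 0" and b: "bal S k D"
    and xs: "set xs \<subseteq> S" "\<forall>j. Suc j < length xs \<longrightarrow> k (xs ! j) (xs ! Suc j) > 0"
    and pa: "D (xs ! 0) > 0"
  shows "\<forall>j. j < length xs \<longrightarrow> D (xs ! j) > 0"
proof
  fix j show "j < length xs \<longrightarrow> D (xs ! j) > 0"
  proof (induction j)
    case 0 thus ?case using pa by simp
  next
    case (Suc j)
    show ?case
    proof
      assume j: "Suc j < length xs"
      hence "D (xs ! j) > 0" using Suc by simp
      moreover have "xs ! j \<in> S" "xs ! Suc j \<in> S" using xs(1) j by (auto dest: nth_mem)
      ultimately show "D (xs ! Suc j) > 0"
        using pos_step[OF fin kn Dn b, of "xs ! j" "xs ! Suc j"] xs(2) j by blast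
    qed
  qed
qed

lemma path_pos:
  assumes fin: "finite S" and kn: "\<forall>s\<in>S. \<forall>t\<in>S. s \<noteq> t \<longrightarrow> k s t \<ge> 0"
    and Dn: "\<forall>s\<in>S. D s \<ge> 0" and b: "bal S k D"
    and p: "path_from_to S k P a c" and pa: "D a > 0"
  shows "D c > 0"
proof -
  obtain xs where xs: "xs \<noteq> []" "hd xs = a" "last xs = c" "set xs \<subseteq> S"
    "\<forall>j. Suc j < length xs \<longrightarrow> k (xs ! j) (xs ! Suc j) > 0"
    using p unfolding path_from_to_def by blast
  have "D (xs ! 0) > 0" using xs pa by (simp add: hd_conv_nth)
  hence "\<forall>j. j < length xs \<longrightarrow> D (xs ! j) > 0" using list_pos[OF fin kn Dn b xs(4,5)] by blast
  moreover have "length xs - 1 < length xs" using xs(1) by simp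
  ultimately show ?thesis using xs(1,3) by (metis last_conv_nth)
qed



lemma path_refl: "a \<in> S \<Longrightarrow> path_from_to S k P a a"
  unfolding path_from_to_def by (rule exI[of _ "[a]"]) auto

lemma path_snoc:
  assumes p: "path_from_to S k (\<lambda>_ _. True) a b" and c: "c \<in> S" "k b c > 0"
  shows "path_from_to S k (\<lambda>_ _. True) a c"
proof -
  obtain xs where xs: "xs \<noteq> []" "hd xs = a" "last xs = b" "set xs \<subseteq> S"
    "\<forall>j. Suc j < length xs \<longrightarrow> k (xs ! j) (xs ! Suc j) > 0"
    using p unfolding path_from_to_def by blast
  have "\<forall>j. Suc j < length (xs @ [c]) \<longrightarrow> k ((xs@[c]) ! j) ((xs@[c]) ! Suc j) > 0"
  proof (intro allI impI)
    fix j assume j: "Suc j < length (xs @ [c])"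
    show "k ((xs@[c]) ! j) ((xs@[c]) ! Suc j) > 0"
    proof (cases "Suc j < length xs")
      case True thus ?thesis using xs(5) by (simp add: nth_append)
    next
      case False
      hence "j = length xs - 1" using j by simp
      moreover have "xs ! (length xs - 1) = b" using xs(1,3) by (metis last_conv_nth)
      ultimately show ?thesis using False j c xs(1) by (simp add: nth_append)
    qed
  qed
  thus ?thesis unfolding path_from_to_def using xs c
    by (intro exI[of _ "xs @ [c]"]) auto
qed

lemma e0_pos:
  assumes fin: "finite S" and kn: "\<forall>s\<in>S. \<forall>t\<in>S. s \<noteq> t \<longrightarrow> k s t \<ge> 0"
    and Dn: "\<forall>s\<in>S. D s \<ge> 0" and b: "bal S k D" and nz: "\<exists>s\<in>S. D s \<noteq> 0"
    and paths: "\<forall>s\<in>S. path_from_to S k Q s e0"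
  shows "D e0 > 0"
proof -
  obtain s where s: "s \<in> S" "D s \<noteq> 0" using nz by blast
  hence "D s > 0" using Dn by force
  thus ?thesis using path_pos[OF fin kn Dn b] paths s by blast
qed

lemma crossing:
  assumes "xs \<noteq> []" "W (xs ! 0)" "\<not> W (last xs)"
  shows "\<exists>j. Suc j < length xs \<and> W (xs ! j) \<and> \<not> W (xs ! Suc j)"
proof (rule ccontr)
  assume c: "\<not> ?thesis"
  have "\<forall>j. j < length xs \<longrightarrow> W (xs ! j)"
  proof
    fix j show "j < length xs \<longrightarrow> W (xs ! j)"
      by (induction j) (use assms c in auto)
  qed
  moreover have "length xs - 1 < length xs" using assms by simp
  ultimately show False using assms by (metis last_conv_nth)
qed

lemma off_reach:
  assumes fin: "finite S" and kn: "\<forall>s\<in>S. \<forall>t\<in>S. s \<noteq> t \<longrightarrow> k s t \<ge> 0"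
    and Dn: "\<forall>s\<in>S. D s \<ge> 0" and b: "bal S k D" and e0: "e0 \<in> S"
    and paths: "\<forall>s\<in>S. path_from_to S k (\<lambda>_ _. True) s e0"
    and s0: "s0 \<in> S" "\<not> path_from_to S k (\<lambda>_ _. True) e0 s0"
  shows "D s0 = 0"
proof -
  define U where "U = {s\<in>S. path_from_to S k (\<lambda>_ _. True) e0 s}"
  define W where "W = S - U"
  have US: "U \<subseteq> S" unfolding U_def by auto
  have finU: "finite U" "finite W" using fin US unfolding W_def by (simp_all add: finite_subset)
  have kUW: "k t s = 0" if "t \<in> U" "s \<in> W" for t s
  proof (rule ccontr)
    assume "k t s \<noteq> 0"
    moreover have "t \<noteq> s" using that unfolding W_def by auto
    ultimately have "k t s > 0" using kn that US unfolding W_def by force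
    moreover have "path_from_to S k (\<lambda>_ _. True) e0 t" using that(1) unfolding U_def by simp
    moreover have "s \<in> S" using that(2) unfolding W_def by simp
    ultimately have "path_from_to S k (\<lambda>_ _. True) e0 s"
      using path_snoc by metis
    thus False using that unfolding U_def W_def by auto
  qed
  have split: "\<And>f. (\<Sum>t\<in>S. f t) = (\<Sum>t\<in>W. f t) + (\<Sum>t\<in>U. f t)"
    using sum.subset_diff[OF US fin] unfolding W_def by simp
  have b0: "(\<Sum>s\<in>W. D s * (\<Sum>t\<in>S. k s t)) = (\<Sum>s\<in>W. \<Sum>t\<in>S. D t * k t s)"
    using b unfolding bal_def W_def by (intro sum.cong) auto
  have L1: "D s * (\<Sum>t\<in>S. k s t) = (\<Sum>t\<in>W. D s * k s t) + (\<Sum>t\<in>U. D s * k s t)" for s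
    unfolding sum_distrib_left by (rule split)
  have R1: "(\<Sum>t\<in>S. D t * k t s) = (\<Sum>t\<in>W. D t * k t s) + (\<Sum>t\<in>U. D t * k t s)" for s
    by (rule split)
  have "(\<Sum>s\<in>W. \<Sum>t\<in>W. D s * k s t) + (\<Sum>s\<in>W. \<Sum>t\<in>U. D s * k s t)
      = (\<Sum>s\<in>W. \<Sum>t\<in>W. D t * k t s) + (\<Sum>s\<in>W. \<Sum>t\<in>U. D t * k t s)"
    using b0 by (simp only: L1 R1 sum.distrib)
  moreover have "(\<Sum>s\<in>W. \<Sum>t\<in>U. D t * k t s) = 0"
    using kUW by (intro sum.neutral ballI) auto
  moreover have "(\<Sum>s\<in>W. \<Sum>t\<in>W. D s * k s t) = (\<Sum>s\<in>W. \<Sum>t\<in>W. D t * k t s)"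
    by (rule sum.swap)
  ultimately have Y: "(\<Sum>s\<in>W. \<Sum>t\<in>U. D s * k s t) = 0" by simp
  have nn: "0 \<le> D s * k s t" if "s \<in> W" "t \<in> U" for s t
  proof -
    have "s \<noteq> t" "s \<in> S" "t \<in> S" using that US unfolding W_def by auto
    thus ?thesis using kn Dn by simp
  qed
  have h1: "(\<Sum>s\<in>W. \<Sum>t\<in>U. D s * k s t) = 0 \<longleftrightarrow> (\<forall>s\<in>W. (\<Sum>t\<in>U. D s * k s t) = 0)"
    by (rule sum_nonneg_eq_0_iff) (use finU nn in \<open>auto intro: sum_nonneg\<close>)
  have h2: "(\<Sum>t\<in>U. D s * k s t) = 0 \<longleftrightarrow> (\<forall>t\<in>U. D s * k s t = 0)" if "s \<in> W" for s
    by (rule sum_nonneg_eq_0_iff) (use finU nn that in auto)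
  have Z: "\<forall>s\<in>W. \<forall>t\<in>U. D s * k s t = 0" using Y h1 h2 by blast
  show ?thesis
  proof (rule ccontr)
    assume "D s0 \<noteq> 0"
    moreover have "D s0 \<ge> 0" using Dn s0(1) by blast
    ultimately have pos: "D s0 > 0" by simp
    obtain xs where xs: "xs \<noteq> []" "hd xs = s0" "last xs = e0" "set xs \<subseteq> S"
      "\<forall>j. Suc j < length xs \<longrightarrow> k (xs ! j) (xs ! Suc j) > 0"
    proof -
      have "path_from_to S k (\<lambda>_ _. True) s0 e0" using paths s0(1) by blast
      thus ?thesis using that unfolding path_from_to_def by blast
    qed
    have "path_from_to S k (\<lambda>_ _. True) e0 e0" by (rule path_refl[OF e0])
    hence "e0 \<in> U" using e0 unfolding U_def by simp
    have s0W: "s0 \<in> W" using s0 unfolding W_def U_def by simp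
    have w0: "xs ! 0 \<in> W" using xs(1,2) s0W by (simp add: hd_conv_nth)
    have wl: "last xs \<notin> W" using xs(3) \<open>e0 \<in> U\<close> unfolding W_def by simp
    obtain j where j: "Suc j < length xs" "xs ! j \<in> W" "xs ! Suc j \<notin> W"
      using crossing[of xs "\<lambda>x. x \<in> W", OF xs(1) w0 wl] by blast
    have inS: "xs ! Suc j \<in> S" using xs(4) j(1) nth_mem by blast
    hence u: "xs ! Suc j \<in> U" using j(3) unfolding W_def by simp
    have "D (xs ! 0) > 0" using xs(1,2) pos by (simp add: hd_conv_nth)
    hence "D (xs ! j) > 0" using list_pos[OF fin kn Dn b xs(4,5)] j(1) by simp
    moreover have "k (xs ! j) (xs ! Suc j) > 0" using xs(5) j(1) by simp
    ultimately have "D (xs ! j) * k (xs ! j) (xs ! Suc j) > 0" by simp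
    moreover have "D (xs ! j) * k (xs ! j) (xs ! Suc j) = 0" using Z j(2) u by blast
    ultimately show False by simp
  qed
qed



lemma unique_dist:
  assumes fin: "finite S" and kn: "\<forall>s\<in>S. \<forall>t\<in>S. s \<noteq> t \<longrightarrow> k s t \<ge> 0"
    and e0: "e0 \<in> S"
    and paths: "\<forall>s\<in>S. path_from_to S k (\<lambda>_ _. True) s e0"
    and P1: "stationary_distribution S k P1" and P2: "stationary_distribution S k P2"
  shows "\<forall>s\<in>S. P1 s = P2 s"
proof -
  define U where "U = {s\<in>S. path_from_to S k (\<lambda>_ _. True) e0 s}"
  have US: "U \<subseteq> S" unfolding U_def by auto
  have finU: "finite U" using fin US by (simp add: finite_subset)
  have "path_from_to S k (\<lambda>_ _. True) e0 e0" by (rule path_refl[OF e0])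
  hence e0U: "e0 \<in> U" using e0 unfolding U_def by simp
  have posU: "D u > 0" if Dn: "\<forall>s\<in>S. D s \<ge> 0" and b: "bal S k D" and nz: "\<exists>s\<in>S. D s \<noteq> 0"
    and u: "u \<in> U" for D u
  proof -
    have "D e0 > 0" by (rule e0_pos[OF fin kn Dn b nz paths])
    moreover have "path_from_to S k (\<lambda>_ _. True) e0 u" using u unfolding U_def by simp
    ultimately show ?thesis using path_pos[OF fin kn Dn b] by blast
  qed
  have zW: "D s = 0" if Dn: "\<forall>s\<in>S. D s \<ge> 0" and b: "bal S k D" and s: "s \<in> S" "s \<notin> U" for D s
  proof -
    have "\<not> path_from_to S k (\<lambda>_ _. True) e0 s" using s unfolding U_def by simp
    thus ?thesis using off_reach[OF fin kn Dn b e0 paths s(1)] by blast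
  qed
  have dist: "(\<forall>s\<in>S. P s \<ge> 0) \<and> bal S k P \<and> (\<exists>s\<in>S. P s \<noteq> 0) \<and> sum P S = 1"
    if "stationary_distribution S k P" for P
  proof -
    have a: "\<forall>s\<in>S. P s \<ge> 0" "bal S k P" "sum P S = 1"
      using that unfolding stationary_distribution_def bal_def by auto
    have "\<exists>s\<in>S. P s \<noteq> 0"
    proof (rule ccontr)
      assume "\<not> ?thesis"
      hence "sum P S = 0" by simp
      thus False using a by simp
    qed
    thus ?thesis using a by blast
  qed
  note d1 = dist[OF P1] and d2 = dist[OF P2]
  have p1U: "P1 u > 0" if "u \<in> U" for u using posU[of P1 u] d1 that by blast
  define f where "f u = P2 u / P1 u" for u
  define lam where "lam = Min (f ` U)"
  have lam_le: "lam \<le> f u" if "u \<in> U" for u unfolding lam_def using finU that by simp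
  obtain u0 where u0: "u0 \<in> U" "lam = f u0"
    unfolding lam_def using Min_in[of "f ` U"] finU e0U by blast
  define D where "D s = P2 s - lam * P1 s" for s
  have Dn: "\<forall>s\<in>S. D s \<ge> 0"
  proof
    fix s assume s: "s \<in> S"
    show "D s \<ge> 0"
    proof (cases "s \<in> U")
      case True
      hence "lam \<le> P2 s / P1 s" "P1 s > 0" using lam_le p1U unfolding f_def by auto
      hence "lam * P1 s \<le> P2 s" by (simp add: le_divide_eq)
      thus ?thesis unfolding D_def by simp
    next
      case False
      thus ?thesis using zW[of P1 s] zW[of P2 s] d1 d2 s unfolding D_def by simp
    qed
  qed
  have bD: "bal S k D"
    unfolding bal_def
  proof
    fix s assume s: "s \<in> S"
    have e1: "P1 s * (\<Sum>t\<in>S. k s t) = (\<Sum>t\<in>S. P1 t * k t s)"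
         and e2: "P2 s * (\<Sum>t\<in>S. k s t) = (\<Sum>t\<in>S. P2 t * k t s)"
      using d1 d2 s unfolding bal_def by auto
    have "D s * (\<Sum>t\<in>S. k s t) = P2 s * (\<Sum>t\<in>S. k s t) - lam * (P1 s * (\<Sum>t\<in>S. k s t))"
      unfolding D_def by (simp add: algebra_simps)
    also have "\<dots> = (\<Sum>t\<in>S. P2 t * k t s) - lam * (\<Sum>t\<in>S. P1 t * k t s)" using e1 e2 by simp
    also have "\<dots> = (\<Sum>t\<in>S. P2 t * k t s - lam * (P1 t * k t s))"
      by (simp add: sum_subtractf sum_distrib_left)
    also have "\<dots> = (\<Sum>t\<in>S. D t * k t s)" unfolding D_def by (simp add: algebra_simps)
    finally show "D s * (\<Sum>t\<in>S. k s t) = (\<Sum>t\<in>S. D t * k t s)" .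
  qed
  have Du0: "D u0 = 0" using u0 p1U[OF u0(1)] unfolding D_def f_def by simp
  have D0: "\<forall>s\<in>S. D s = 0"
  proof (rule ccontr)
    assume "\<not> ?thesis"
    hence "\<exists>s\<in>S. D s \<noteq> 0" by blast
    hence "D u0 > 0" using posU[OF Dn bD _ u0(1)] by blast
    thus False using Du0 by simp
  qed
  hence "\<forall>s\<in>S. P2 s = lam * P1 s" unfolding D_def by simp
  hence "sum P2 S = lam * sum P1 S" by (simp add: sum_distrib_left)
  hence "lam = 1" using d1 d2 by simp
  thus ?thesis using \<open>\<forall>s\<in>S. P2 s = lam * P1 s\<close> by simp
qed



lemma adde_inj: "adde x i = adde x j \<Longrightarrow> i = j"
proof (rule ccontr)
  assume a: "adde x i = adde x j" "i \<noteq> j"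
  hence "adde x i i = adde x j i" by simp
  thus False using a(2) unfolding adde_def by simp
qed

lemma le_adde: "x \<le> adde x i"
  unfolding adde_def le_fun_def by simp

lemma not_adde_le: "\<not> adde x i \<le> x"
proof
  assume "adde x i \<le> x"
  hence "adde x i i \<le> x i" by (simp add: le_fun_def)
  thus False unfolding adde_def by simp
qed

lemma adde_neq: "adde x i \<noteq> x"
  using not_adde_le[of x i] by auto

lemma adde_adde_neq: "adde (adde x i) j \<noteq> x"
proof
  assume "adde (adde x i) j = x"
  hence "adde x i \<le> x" using le_adde[of "adde x i" j] by simp
  thus False using not_adde_le by blast
qed

lemma qpol_up:
  assumes "i < n" "sz t = adde (sz s) i"
  shows "qpol n sz q \<gamma> s t = q s t * \<gamma> s i"
proof -
  have ex: "\<exists>i<n. sz t = adde (sz s) i" using assms by blast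
  have "(THE j. j < n \<and> sz t = adde (sz s) j) = i"
    using assms adde_inj by (intro the_equality) auto
  thus ?thesis using ex unfolding qpol_def by simp
qed

lemma qpol_other:
  assumes "\<not> (\<exists>i<n. sz t = adde (sz s) i)"
  shows "qpol n sz q \<gamma> s t = q s t"
  unfolding qpol_def by (rule if_not_P[OF assms])

lemma qpol_zero:
  assumes "q s t = 0"
  shows "qpol n sz q \<gamma> s t = 0"
  using assms unfolding qpol_def by simp

lemma sum_Up:
  assumes fin: "finite S"
  shows "(\<Sum>t\<in>{t\<in>S. \<exists>i<n. sz t = adde x i}. f t) = (\<Sum>i<n. \<Sum>t\<in>level S sz (adde x i). f t)"
proof -
  have eq: "{t\<in>S. \<exists>i<n. sz t = adde x i} = (\<Union>i\<in>{..<n}. level S sz (adde x i))"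
  proof (intro set_eqI iffI)
    fix t assume "t \<in> {t\<in>S. \<exists>i<n. sz t = adde x i}"
    then obtain i where "t \<in> S" "i < n" "sz t = adde x i" by blast
    thus "t \<in> (\<Union>i\<in>{..<n}. level S sz (adde x i))" unfolding level_def by blast
  next
    fix t assume "t \<in> (\<Union>i\<in>{..<n}. level S sz (adde x i))"
    then obtain i where "i < n" "t \<in> level S sz (adde x i)" by blast
    thus "t \<in> {t\<in>S. \<exists>i<n. sz t = adde x i}" unfolding level_def by blast
  qed
  have disj: "level S sz (adde x i) \<inter> level S sz (adde x j) = {}" if "i \<noteq> j" for i j
  proof -
    have "t \<notin> level S sz (adde x i) \<inter> level S sz (adde x j)" for t
    proof
      assume "t \<in> level S sz (adde x i) \<inter> level S sz (adde x j)"
      hence "sz t = adde x i" "sz t = adde x j" unfolding level_def by auto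
      hence "adde x i = adde x j" by metis
      thus False using adde_inj that by metis
    qed
    thus ?thesis by blast
  qed
  have "(\<Sum>t\<in>(\<Union>i\<in>{..<n}. level S sz (adde x i)). f t) = (\<Sum>i<n. \<Sum>t\<in>level S sz (adde x i). f t)"
  proof (rule sum.UNION_disjoint)
    show "\<forall>i\<in>{..<n}. finite (level S sz (adde x i))" using fin unfolding level_def by simp
    show "\<forall>i\<in>{..<n}. \<forall>j\<in>{..<n}. i \<noteq> j \<longrightarrow> level S sz (adde x i) \<inter> level S sz (adde x j) = {}"
      using disj by blast
  qed simp
  thus ?thesis using eq by simp
qed

lemma split_if_sum:
  assumes "finite S" "U \<subseteq> S"
  shows "(\<Sum>t\<in>S. if t \<in> U then a t else b t) = (\<Sum>t\<in>U. a t) + (\<Sum>t\<in>S-U. b t)"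
proof -
  have "(\<Sum>t\<in>S. if t \<in> U then a t else b t) = (\<Sum>t\<in>S-U. if t \<in> U then a t else b t) + (\<Sum>t\<in>U. if t \<in> U then a t else b t)"
    by (rule sum.subset_diff[OF assms(2,1)])
  also have "(\<Sum>t\<in>S-U. if t \<in> U then a t else b t) = (\<Sum>t\<in>S-U. b t)" by (rule sum.cong) auto
  also have "(\<Sum>t\<in>U. if t \<in> U then a t else b t) = (\<Sum>t\<in>U. a t)" by (rule sum.cong) auto
  finally show ?thesis by (simp add: add.commute)
qed

lemma qr_sum:
  assumes fin: "finite S" and qr: "quasi_reversible n S sz q" and Pi: "stationary_measure S q Pi"
    and s: "s \<in> S"
  shows "(\<Sum>t\<in>{t\<in>S. \<exists>i<n. sz t = adde (sz s) i}. Pi s * q s t * w (sz t))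
       = (\<Sum>t\<in>{t\<in>S. \<exists>i<n. sz t = adde (sz s) i}. Pi t * q t s * w (sz t))"
proof -
  have inner: "(\<Sum>t\<in>level S sz (adde (sz s) i). Pi s * q s t * w (sz t))
       = (\<Sum>t\<in>level S sz (adde (sz s) i). Pi t * q t s * w (sz t))" if i: "i < n" for i
  proof -
    have qe: "Pi s * (\<Sum>t\<in>level S sz (adde (sz s) i). q s t) = (\<Sum>t\<in>level S sz (adde (sz s) i). Pi t * q t s)"
      using qr Pi s i unfolding quasi_reversible_def by blast
    have "(\<Sum>t\<in>level S sz (adde (sz s) i). Pi s * q s t * w (sz t))
        = (\<Sum>t\<in>level S sz (adde (sz s) i). w (adde (sz s) i) * (Pi s * q s t))"
      by (rule sum.cong) (auto simp: level_def)
    also have "\<dots> = w (adde (sz s) i) * (Pi s * (\<Sum>t\<in>level S sz (adde (sz s) i). q s t))"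
      by (simp add: sum_distrib_left)
    also have "\<dots> = w (adde (sz s) i) * (\<Sum>t\<in>level S sz (adde (sz s) i). Pi t * q t s)"
      using qe by simp
    also have "\<dots> = (\<Sum>t\<in>level S sz (adde (sz s) i). Pi t * q t s * w (sz t))"
      by (simp add: sum_distrib_left level_def mult.commute)
    finally show ?thesis .
  qed
  show ?thesis unfolding sum_Up[OF fin] by (rule sum.cong[OF refl], rule inner) simp
qed



lemma stat_gamma:
  assumes fin: "finite S" and qs: "queueing_system n S sz q e0" and qr: "quasi_reversible n S sz q"
    and Pi: "stationary_measure S q Pi"
    and Gb: "\<forall>s\<in>S. \<forall>i<n. adde (sz s) i \<in> sz ` S \<longrightarrow> \<Gamma> (sz s) * \<gamma> s i = \<Gamma> (adde (sz s) i)"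
  shows "bal S (qpol n sz q \<gamma>) (\<lambda>s. Pi s * \<Gamma> (sz s))"
  unfolding bal_def
proof
  fix s assume s: "s \<in> S"
  have adj: "\<forall>s\<in>S. \<forall>t\<in>S. q s t \<noteq> 0 \<longrightarrow>
        sz t = sz s \<or> (\<exists>i<n. sz t = adde (sz s) i \<or> sz s = adde (sz t) i)"
    using qs unfolding queueing_system_def by blast
  define Up where "Up = {t\<in>S. \<exists>i<n. sz t = adde (sz s) i}"
  have UpS: "Up \<subseteq> S" unfolding Up_def by blast
  have termL: "Pi s * \<Gamma> (sz s) * qpol n sz q \<gamma> s t
      = (if t \<in> Up then Pi s * q s t * \<Gamma> (sz t) else \<Gamma> (sz s) * (Pi s * q s t))" if t: "t \<in> S" for t
  proof (cases "t \<in> Up")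
    case True
    then obtain i where i: "i < n" "sz t = adde (sz s) i" unfolding Up_def by blast
    have "adde (sz s) i \<in> sz ` S" using i(2) t by (metis image_eqI)
    hence g: "\<Gamma> (sz s) * \<gamma> s i = \<Gamma> (sz t)" using Gb s i by simp
    have "Pi s * \<Gamma> (sz s) * qpol n sz q \<gamma> s t = Pi s * q s t * (\<Gamma> (sz s) * \<gamma> s i)"
      using qpol_up[OF i, of q \<gamma>] by simp
    thus ?thesis using True g by simp
  next
    case False
    hence "\<not> (\<exists>i<n. sz t = adde (sz s) i)" using t unfolding Up_def by blast
    hence "qpol n sz q \<gamma> s t = q s t" by (rule qpol_other)
    thus ?thesis using False by simp
  qed
  have termR: "Pi t * \<Gamma> (sz t) * qpol n sz q \<gamma> t s
      = (if t \<in> Up then Pi t * q t s * \<Gamma> (sz t) else \<Gamma> (sz s) * (Pi t * q t s))" if t: "t \<in> S" for t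
  proof (cases "t \<in> Up")
    case True
    then obtain i where i: "i < n" "sz t = adde (sz s) i" unfolding Up_def by blast
    have "\<not> (\<exists>j<n. sz s = adde (sz t) j)" using i(2) adde_adde_neq by metis
    hence "qpol n sz q \<gamma> t s = q t s" by (rule qpol_other)
    thus ?thesis using True by simp
  next
    case False
    show ?thesis
    proof (cases "q t s = 0")
      case True
      thus ?thesis using qpol_zero[of q t s n sz \<gamma>] False by simp
    next
      case qnz: False
      have nup: "\<not> (\<exists>i<n. sz t = adde (sz s) i)" using t False unfolding Up_def by blast
      have "sz s = sz t \<or> (\<exists>i<n. sz s = adde (sz t) i)"
        using adj t s qnz nup by blast
      thus ?thesis
      proof
        assume eq: "sz s = sz t"
        have "\<not> (\<exists>j<n. sz s = adde (sz t) j)" using eq adde_neq by metis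
        hence "qpol n sz q \<gamma> t s = q t s" by (rule qpol_other)
        thus ?thesis using False eq by simp
      next
        assume "\<exists>i<n. sz s = adde (sz t) i"
        then obtain i where i: "i < n" "sz s = adde (sz t) i" by blast
        have "adde (sz t) i \<in> sz ` S" using i(2) s by (metis image_eqI)
        hence g: "\<Gamma> (sz t) * \<gamma> t i = \<Gamma> (sz s)" using Gb t i by simp
        have "Pi t * \<Gamma> (sz t) * qpol n sz q \<gamma> t s = Pi t * q t s * (\<Gamma> (sz t) * \<gamma> t i)"
          using qpol_up[OF i, of q \<gamma>] by simp
        thus ?thesis using False g by (simp add: mult.commute)
      qed
    qed
  qed
  have glob: "Pi s * (\<Sum>t\<in>S. q s t) = (\<Sum>t\<in>S. Pi t * q t s)"
    using Pi s unfolding stationary_measure_def by blast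
  have qr1: "(\<Sum>t\<in>Up. Pi s * q s t * \<Gamma> (sz t)) = (\<Sum>t\<in>Up. Pi t * q t s * \<Gamma> (sz t))"
    unfolding Up_def by (rule qr_sum[OF fin qr Pi s])
  have qr2: "(\<Sum>t\<in>Up. Pi s * q s t * 1) = (\<Sum>t\<in>Up. Pi t * q t s * 1)"
    unfolding Up_def by (rule qr_sum[OF fin qr Pi s])
  have sp1: "(\<Sum>t\<in>S. Pi s * q s t) = (\<Sum>t\<in>S-Up. Pi s * q s t) + (\<Sum>t\<in>Up. Pi s * q s t)"
    by (rule sum.subset_diff[OF UpS fin])
  have sp2: "(\<Sum>t\<in>S. Pi t * q t s) = (\<Sum>t\<in>S-Up. Pi t * q t s) + (\<Sum>t\<in>Up. Pi t * q t s)"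
    by (rule sum.subset_diff[OF UpS fin])
  have E: "(\<Sum>t\<in>S-Up. Pi s * q s t) = (\<Sum>t\<in>S-Up. Pi t * q t s)"
    using glob sp1 sp2 qr2 by (simp add: sum_distrib_left)
  have "Pi s * \<Gamma> (sz s) * (\<Sum>t\<in>S. qpol n sz q \<gamma> s t) = (\<Sum>t\<in>S. Pi s * \<Gamma> (sz s) * qpol n sz q \<gamma> s t)"
    by (simp add: sum_distrib_left)
  also have "\<dots> = (\<Sum>t\<in>S. if t \<in> Up then Pi s * q s t * \<Gamma> (sz t) else \<Gamma> (sz s) * (Pi s * q s t))"
    using termL by (rule sum.cong[OF refl])
  also have "\<dots> = (\<Sum>t\<in>Up. Pi s * q s t * \<Gamma> (sz t)) + (\<Sum>t\<in>S-Up. \<Gamma> (sz s) * (Pi s * q s t))"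
    by (rule split_if_sum[OF fin UpS])
  also have "\<dots> = (\<Sum>t\<in>Up. Pi t * q t s * \<Gamma> (sz t)) + (\<Sum>t\<in>S-Up. \<Gamma> (sz s) * (Pi t * q t s))"
    using qr1 E by (simp add: sum_distrib_left[symmetric])
  also have "\<dots> = (\<Sum>t\<in>S. if t \<in> Up then Pi t * q t s * \<Gamma> (sz t) else \<Gamma> (sz s) * (Pi t * q t s))"
    by (rule split_if_sum[OF fin UpS, symmetric])
  also have "\<dots> = (\<Sum>t\<in>S. Pi t * \<Gamma> (sz t) * qpol n sz q \<gamma> t s)"
    using termR by (rule sum.cong[OF refl, symmetric])
  finally show "Pi s * \<Gamma> (sz s) * (\<Sum>t\<in>S. qpol n sz q \<gamma> s t) = (\<Sum>t\<in>S. Pi t * \<Gamma> (sz t) * qpol n sz q \<gamma> t s)" .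
qed



lemma path_conv:
  assumes "path_from_to S k Pr a b" and "\<forall>u v. Pr u v \<longrightarrow> k u v > 0 \<longrightarrow> k' u v > 0"
  shows "path_from_to S k' (\<lambda>_ _. True) a b"
proof -
  obtain xs where xs: "xs \<noteq> []" "hd xs = a" "last xs = b" "set xs \<subseteq> S"
    "\<forall>j. Suc j < length xs \<longrightarrow> k (xs ! j) (xs ! Suc j) > 0 \<and> Pr (xs ! j) (xs ! Suc j)"
    using assms(1) unfolding path_from_to_def by blast
  have "\<forall>j. Suc j < length xs \<longrightarrow> k' (xs ! j) (xs ! Suc j) > 0" using xs(5) assms(2) by blast
  thus ?thesis unfolding path_from_to_def using xs(1-4) by blast
qed

lemma reward_obj:
  assumes fin: "finite S" and qs: "queueing_system n S sz q e0"
    and a1: "assumption1 n S sz q e0" and qr: "quasi_reversible n S sz q"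
    and Pi: "stationary_measure S q Pi" and adm: "admission_policy n S \<gamma>"
    and Gnn: "\<forall>x\<in>sz ` S. \<Gamma> x \<ge> 0" and G0: "\<Gamma> zvec = 1"
    and Gb: "\<forall>s\<in>S. \<forall>i<n. adde (sz s) i \<in> sz ` S \<longrightarrow> \<Gamma> (sz s) * \<gamma> s i = \<Gamma> (adde (sz s) i)"
    and P: "stationary_distribution S (qpol n sz q \<gamma>) P"
  shows "reward S (qpol n sz q \<gamma>) r R P
           = lp_objective n S sz q Pi r R (\<lambda>x. \<Gamma> x / (\<Sum>s\<in>S. Pi s * \<Gamma> (sz s)))"
    and "lp_feasible n S sz Pi (\<lambda>x. \<Gamma> x / (\<Sum>s\<in>S. Pi s * \<Gamma> (sz s)))"
proof -
  define Z where "Z = (\<Sum>s\<in>S. Pi s * \<Gamma> (sz s))"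
  define k where "k = qpol n sz q \<gamma>"
  have e0: "e0 \<in> S" and sze0: "sz e0 = zvec" using qs unfolding queueing_system_def by auto
  have qn: "\<forall>s\<in>S. \<forall>t\<in>S. s \<noteq> t \<longrightarrow> q s t \<ge> 0" using qs unfolding queueing_system_def by blast
  have pth: "\<forall>s\<in>S. path_from_to S q (\<lambda>u v. sz v \<le> sz u) s e0"
    using a1 unfolding assumption1_def by blast
  have pathq: "\<forall>s\<in>S. path_from_to S q (\<lambda>_ _. True) s e0"
    using pth path_conv[of S q _ _ e0 q] by blast
  have kq: "k u v = q u v" if "sz v \<le> sz u" for u v
  proof -
    have "\<not> (\<exists>i<n. sz v = adde (sz u) i)" using that not_adde_le le_adde by (metis order_trans)
    thus ?thesis unfolding k_def by (rule qpol_other)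
  qed
  have pathk: "\<forall>s\<in>S. path_from_to S k (\<lambda>_ _. True) s e0"
  proof
    fix s assume "s \<in> S"
    hence p: "path_from_to S q (\<lambda>u v. sz v \<le> sz u) s e0" using pth by blast
    show "path_from_to S k (\<lambda>_ _. True) s e0"
      by (rule path_conv[OF p]) (use kq in auto)
  qed
  have kn: "\<forall>s\<in>S. \<forall>t\<in>S. s \<noteq> t \<longrightarrow> k s t \<ge> 0"
  proof (intro ballI impI)
    fix s t assume st: "s \<in> S" "t \<in> S" "s \<noteq> t"
    have q0: "q s t \<ge> 0" using qn st by blast
    show "k s t \<ge> 0"
    proof (cases "\<exists>i<n. sz t = adde (sz s) i")
      case True
      then obtain i where i: "i < n" "sz t = adde (sz s) i" by blast
      have "\<gamma> s i \<ge> 0" using adm st(1) i(1) unfolding admission_policy_def by blast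
      thus ?thesis unfolding k_def using qpol_up[OF i, of q \<gamma>] q0 by simp
    next
      case False
      thus ?thesis unfolding k_def using qpol_other[OF False] q0 by simp
    qed
  qed
  have Pinn: "\<forall>s\<in>S. Pi s \<ge> 0" and Pibal: "bal S q Pi" and Pinz: "\<exists>s\<in>S. Pi s \<noteq> 0"
    using Pi unfolding stationary_measure_def bal_def by auto
  have Pie0: "Pi e0 > 0" by (rule e0_pos[OF fin qn Pinn Pibal Pinz pathq])
  have tnn: "Pi s * \<Gamma> (sz s) \<ge> 0" if "s \<in> S" for s using Pinn Gnn that by simp
  have "Pi e0 * \<Gamma> (sz e0) \<le> Z" unfolding Z_def
    by (rule member_le_sum[OF e0]) (use tnn fin in auto)
  hence Zpos: "Z > 0" using Pie0 sze0 G0 by simp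
  have bG: "bal S k (\<lambda>s. Pi s * \<Gamma> (sz s))" unfolding k_def by (rule stat_gamma[OF fin qs qr Pi Gb])
  have Pd: "stationary_distribution S k (\<lambda>s. Pi s * \<Gamma> (sz s) / Z)"
    unfolding stationary_distribution_def
  proof (intro conjI ballI)
    fix s assume "s \<in> S" thus "Pi s * \<Gamma> (sz s) / Z \<ge> 0" using tnn Zpos by simp
  next
    show "(\<Sum>s\<in>S. Pi s * \<Gamma> (sz s) / Z) = 1" using Zpos unfolding Z_def by (simp add: sum_divide_distrib[symmetric])
  next
    fix s assume s: "s \<in> S"
    have "Pi s * \<Gamma> (sz s) * (\<Sum>t\<in>S. k s t) = (\<Sum>t\<in>S. Pi t * \<Gamma> (sz t) * k t s)"
      using bG s unfolding bal_def by blast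
    hence "Pi s * \<Gamma> (sz s) * (\<Sum>t\<in>S. k s t) / Z = (\<Sum>t\<in>S. Pi t * \<Gamma> (sz t) * k t s) / Z" by simp
    thus "Pi s * \<Gamma> (sz s) / Z * (\<Sum>t\<in>S. k s t) = (\<Sum>t\<in>S. Pi t * \<Gamma> (sz t) / Z * k t s)"
      by (simp add: sum_divide_distrib)
  qed
  have P': "stationary_distribution S k P" using P unfolding k_def .
  have Peq: "\<forall>s\<in>S. P s = Pi s * \<Gamma> (sz s) / Z"
    by (rule unique_dist[OF fin kn e0 pathk P' Pd])
  show "lp_feasible n S sz Pi (\<lambda>x. \<Gamma> x / (\<Sum>s\<in>S. Pi s * \<Gamma> (sz s)))"
    unfolding lp_feasible_def Z_def[symmetric]
  proof (intro conjI ballI allI impI)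
    fix x assume "x \<in> sz ` S"
    hence "\<Gamma> x \<ge> 0" using Gnn by blast
    thus "\<Gamma> x / Z \<ge> 0" using Zpos by simp
  next
    fix x i assume x: "x \<in> sz ` S" and i: "i < n" and ax: "adde x i \<in> sz ` S"
    obtain s where s: "s \<in> S" "x = sz s" using x by blast
    have "\<Gamma> (adde x i) = \<Gamma> x * \<gamma> s i" using Gb s i ax by simp
    moreover have "\<gamma> s i \<le> 1" using adm s i unfolding admission_policy_def by blast
    moreover have "\<Gamma> x \<ge> 0" using Gnn x by blast
    ultimately have "\<Gamma> (adde x i) \<le> \<Gamma> x" by (simp add: mult_left_le)
    thus "\<Gamma> (adde x i) / Z \<le> \<Gamma> x / Z" using Zpos by (simp add: divide_right_mono)
  next
    show "(\<Sum>s\<in>S. Pi s * (\<Gamma> (sz s) / Z)) = 1"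
      using Zpos unfolding Z_def by (simp add: sum_divide_distrib[symmetric])
  qed
  have T1: "(\<Sum>s\<in>S. P s * r s) = (\<Sum>s\<in>S. Pi s * (\<Gamma> (sz s) / Z) * r s)"
    using Peq by (intro sum.cong) auto
  have T23: "(\<Sum>t\<in>S. P s * k s t * R s t)
      = (\<Sum>i<n. \<Sum>t\<in>level S sz (adde (sz s) i). Pi s * (\<Gamma> (adde (sz s) i) / Z) * q s t * R s t)
        + (\<Sum>t\<in>{t\<in>S. \<not> (\<exists>i<n. sz t = adde (sz s) i)}. Pi s * (\<Gamma> (sz s) / Z) * q s t * R s t)"
    if s: "s \<in> S" for s
  proof -
    define Up where "Up = {t\<in>S. \<exists>i<n. sz t = adde (sz s) i}"
    have UpS: "Up \<subseteq> S" unfolding Up_def by blast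
    have tm: "P s * k s t * R s t = (if t \<in> Up then Pi s * (\<Gamma> (sz t) / Z) * q s t * R s t
                  else Pi s * (\<Gamma> (sz s) / Z) * q s t * R s t)" if t: "t \<in> S" for t
    proof (cases "t \<in> Up")
      case True
      then obtain i where i: "i < n" "sz t = adde (sz s) i" unfolding Up_def by blast
      have "adde (sz s) i \<in> sz ` S" using i(2) t by (metis image_eqI)
      hence g: "\<Gamma> (sz s) * \<gamma> s i = \<Gamma> (sz t)" using Gb s i by simp
      have "P s * k s t * R s t = Pi s * (\<Gamma> (sz s) * \<gamma> s i) / Z * q s t * R s t"
        using qpol_up[OF i, of q \<gamma>] Peq s unfolding k_def by simp
      thus ?thesis using True g by simp
    next
      case False
      hence "\<not> (\<exists>i<n. sz t = adde (sz s) i)" using t unfolding Up_def by blast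
      hence "k s t = q s t" unfolding k_def by (rule qpol_other)
      thus ?thesis using False Peq s by simp
    qed
    have "(\<Sum>t\<in>S. P s * k s t * R s t) = (\<Sum>t\<in>S. if t \<in> Up then Pi s * (\<Gamma> (sz t) / Z) * q s t * R s t
                  else Pi s * (\<Gamma> (sz s) / Z) * q s t * R s t)"
      using tm by (rule sum.cong[OF refl])
    also have "\<dots> = (\<Sum>t\<in>Up. Pi s * (\<Gamma> (sz t) / Z) * q s t * R s t) + (\<Sum>t\<in>S-Up. Pi s * (\<Gamma> (sz s) / Z) * q s t * R s t)"
      by (rule split_if_sum[OF fin UpS])
    also have "(\<Sum>t\<in>Up. Pi s * (\<Gamma> (sz t) / Z) * q s t * R s t)
        = (\<Sum>i<n. \<Sum>t\<in>level S sz (adde (sz s) i). Pi s * (\<Gamma> (sz t) / Z) * q s t * R s t)"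
      unfolding Up_def by (rule sum_Up[OF fin])
    also have "\<dots> = (\<Sum>i<n. \<Sum>t\<in>level S sz (adde (sz s) i). Pi s * (\<Gamma> (adde (sz s) i) / Z) * q s t * R s t)"
      by (intro sum.cong refl) (simp add: level_def)
    also have "S - Up = {t\<in>S. \<not> (\<exists>i<n. sz t = adde (sz s) i)}" unfolding Up_def by blast
    finally show ?thesis .
  qed
  have "reward S (qpol n sz q \<gamma>) r R P = (\<Sum>s\<in>S. P s * r s) + (\<Sum>s\<in>S. \<Sum>t\<in>S. P s * k s t * R s t)"
    unfolding reward_def k_def ..
  also have "(\<Sum>s\<in>S. \<Sum>t\<in>S. P s * k s t * R s t)
     = (\<Sum>s\<in>S. (\<Sum>i<n. \<Sum>t\<in>level S sz (adde (sz s) i). Pi s * (\<Gamma> (adde (sz s) i) / Z) * q s t * R s t)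
        + (\<Sum>t\<in>{t\<in>S. \<not> (\<exists>i<n. sz t = adde (sz s) i)}. Pi s * (\<Gamma> (sz s) / Z) * q s t * R s t))"
    using T23 by (rule sum.cong[OF refl])
  finally show "reward S (qpol n sz q \<gamma>) r R P
           = lp_objective n S sz q Pi r R (\<lambda>x. \<Gamma> x / (\<Sum>s\<in>S. Pi s * \<Gamma> (sz s)))"
    unfolding lp_objective_def Z_def[symmetric] T1 sum.distrib by (simp add: add.assoc)
qed



lemma obj_lin:
  "lp_objective n S sz q Pi r R (\<lambda>x. c * f x + g x)
     = c * lp_objective n S sz q Pi r R f + lp_objective n S sz q Pi r R g"
  unfolding lp_objective_def
  by (simp add: sum.distrib sum_distrib_left distrib_left distrib_right mult_ac)

lemma N_lin:
  fixes Pi :: "'a \<Rightarrow> real" and f g :: "(nat \<Rightarrow> nat) \<Rightarrow> real"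
  shows "(\<Sum>s\<in>S. Pi s * (c * f (sz s) + g (sz s))) = c * (\<Sum>s\<in>S. Pi s * f (sz s)) + (\<Sum>s\<in>S. Pi s * g (sz s))"
  by (simp add: sum.distrib sum_distrib_left distrib_left mult_ac)

lemma obj_zero:
  assumes "\<forall>x\<in>sz ` S. f x = 0"
  shows "lp_objective n S sz q Pi r R f = 0"
proof -
  have a: "f (sz s) = 0" if "s \<in> S" for s using assms that by blast
  have b: "(\<Sum>t\<in>level S sz (adde (sz s) i). Pi s * f (adde (sz s) i) * q s t * R s t) = 0" for s i
  proof (rule sum.neutral, rule ballI)
    fix t assume t: "t \<in> level S sz (adde (sz s) i)"
    hence "t \<in> S" "sz t = adde (sz s) i" unfolding level_def by auto
    hence "f (adde (sz s) i) = 0" using a by metis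
    thus "Pi s * f (adde (sz s) i) * q s t * R s t = 0" by simp
  qed
  show ?thesis unfolding lp_objective_def using a b by simp
qed

lemma N_zero:
  fixes Pi :: "'a \<Rightarrow> real" and f :: "(nat \<Rightarrow> nat) \<Rightarrow> real"
  assumes "\<forall>x\<in>sz ` S. f x = 0"
  shows "(\<Sum>s\<in>S. Pi s * f (sz s)) = 0"
  using assms by simp

lemma mono_chain:
  assumes VF: "Ferrers n V"
    and mono: "\<forall>x\<in>V. \<forall>i<n. adde x i \<in> V \<longrightarrow> f (adde x i) \<le> f x"
    and x: "x \<in> V"
  shows "y \<le> x \<Longrightarrow> (f x :: real) \<le> f y"
proof (induction "\<Sum>j<n. x j - y j" arbitrary: y rule: less_induct)
  case less
  have Vv: "V \<subseteq> vecs n" and dc: "\<forall>x\<in>V. \<forall>y. y \<le> x \<longrightarrow> y \<in> V" using VF unfolding Ferrers_def by auto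
  have xv: "\<forall>j\<ge>n. x j = 0" using Vv x unfolding vecs_def by blast
  have yle: "y j \<le> x j" for j using less(2) by (simp add: le_fun_def)
  show ?case
  proof (cases "\<forall>j<n. y j = x j")
    case True
    have "y = x"
    proof
      fix j show "y j = x j"
        using True xv yle[of j] by (cases "j < n") auto
    qed
    thus ?thesis by simp
  next
    case False
    then obtain j where j: "j < n" "y j \<noteq> x j" by blast
    hence ylt: "y j < x j" using yle[of j] by simp
    define y' where "y' = adde y j"
    have y'le: "y' \<le> x" unfolding y'_def adde_def le_fun_def using yle ylt by auto
    have yV: "y \<in> V" using dc x less(2) by blast
    have y'V: "y' \<in> V" using dc x y'le by blast
    have step: "f y' \<le> f y" using mono yV j(1) y'V unfolding y'_def by blast
    have "(\<Sum>m<n. x m - y' m) < (\<Sum>m<n. x m - y m)"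
    proof (rule sum_strict_mono_ex1)
      show "\<forall>m\<in>{..<n}. x m - y' m \<le> x m - y m" unfolding y'_def adde_def by auto
      show "\<exists>m\<in>{..<n}. x m - y' m < x m - y m"
        using j(1) ylt unfolding y'_def adde_def by (intro bexI[of _ j]) auto
    qed simp
    hence "f x \<le> f y'" using less(1) y'le by blast
    thus ?thesis using step by simp
  qed
qed

lemma lp_bound:
  fixes obj N :: "((nat \<Rightarrow> nat) \<Rightarrow> real) \<Rightarrow> real" and M :: real
  assumes fin: "finite V" and VF: "Ferrers n V"
    and objlin: "\<And>c f g. obj (\<lambda>x. c * f x + g x) = c * obj f + obj g"
    and Nlin: "\<And>c f g. N (\<lambda>x. c * f x + g x) = c * N f + N g"
    and obj0: "\<And>f. \<forall>x\<in>V. f x = 0 \<Longrightarrow> obj f = 0"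
    and N0: "\<And>f. \<forall>x\<in>V. f x = 0 \<Longrightarrow> N f = 0"
    and HM: "\<And>A. Ferrers n A \<Longrightarrow> A \<subseteq> V \<Longrightarrow> obj (\<lambda>x. if x \<in> A then 1 else 0) \<le> M * N (\<lambda>x. if x \<in> A then 1 else 0)"
  shows "(\<forall>x\<in>V. G x \<ge> 0) \<Longrightarrow> (\<forall>x\<in>V. \<forall>i<n. adde x i \<in> V \<longrightarrow> G (adde x i) \<le> G x) \<Longrightarrow> obj G \<le> M * N G"
proof (induction "card {x\<in>V. G x > 0}" arbitrary: G rule: less_induct)
  case less
  define A where "A = {x\<in>V. G x > 0}"
  have finA: "finite A" using fin unfolding A_def by simp
  have Vv: "V \<subseteq> vecs n" and z: "zvec \<in> V" and dc: "\<forall>x\<in>V. \<forall>y. y \<le> x \<longrightarrow> y \<in> V"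
    using VF unfolding Ferrers_def by auto
  show ?case
  proof (cases "A = {}")
    case True
    hence "\<forall>x\<in>V. G x = 0" using less(2) unfolding A_def by force
    thus ?thesis using obj0 N0 by simp
  next
    case False
    define c where "c = Min (G ` A)"
    have cin: "c \<in> G ` A" unfolding c_def using finA False by simp
    then obtain xs where xs: "xs \<in> A" "G xs = c" by blast
    have cle: "c \<le> G x" if "x \<in> A" for x unfolding c_def using finA that by simp
    have cpos: "c > 0" using xs unfolding A_def by auto
    have downA: "y \<in> A" if "x \<in> A" "y \<le> x" for x y
    proof -
      have "x \<in> V" using that unfolding A_def by simp
      hence yV: "y \<in> V" using dc that(2) by blast
      have "G x \<le> G y" using mono_chain[OF VF less(3) \<open>x \<in> V\<close> that(2)] .
      thus ?thesis using that yV unfolding A_def by simp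
    qed
    have "zvec \<le> xs" unfolding zvec_def le_fun_def by simp
    hence zA: "zvec \<in> A" using downA xs(1) by blast
    have AF: "Ferrers n A" unfolding Ferrers_def using Vv zA downA unfolding A_def by blast
    have AV: "A \<subseteq> V" unfolding A_def by blast
    define ind where "ind x = (if x \<in> A then 1 else (0::real))" for x
    define G' where "G' x = G x - c * ind x" for x
    have Geq: "G = (\<lambda>x. c * ind x + G' x)" unfolding G'_def by simp
    have G'nn: "\<forall>x\<in>V. G' x \<ge> 0"
    proof
      fix x assume x: "x \<in> V"
      show "G' x \<ge> 0"
        using cle[of x] less(2) x unfolding G'_def ind_def by (cases "x \<in> A") auto
    qed
    have zeroout: "G x = 0" if "x \<in> V" "x \<notin> A" for x
      using less(2) that unfolding A_def by force
    have G'mono: "\<forall>x\<in>V. \<forall>i<n. adde x i \<in> V \<longrightarrow> G' (adde x i) \<le> G' x"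
    proof (intro ballI allI impI)
      fix x i assume x: "x \<in> V" and i: "i < n" and ax: "adde x i \<in> V"
      have m: "G (adde x i) \<le> G x" using less(3) x i ax by blast
      show "G' (adde x i) \<le> G' x"
      proof (cases "adde x i \<in> A")
        case True
        hence "x \<in> A" using downA le_adde by blast
        thus ?thesis using True m unfolding G'_def ind_def by simp
      next
        case nA: False
        show ?thesis
        proof (cases "x \<in> A")
          case True
          thus ?thesis using nA zeroout[OF ax nA] cle[OF True] unfolding G'_def ind_def by simp
        next
          case False
          thus ?thesis using nA m unfolding G'_def ind_def by simp
        qed
      qed
    qed
    have sub: "{x\<in>V. G' x > 0} \<subset> A"
    proof
      show "{x\<in>V. G' x > 0} \<subseteq> A"
      proof
        fix x assume "x \<in> {x\<in>V. G' x > 0}"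
        hence x: "x \<in> V" "G' x > 0" by auto
        show "x \<in> A"
        proof (rule ccontr)
          assume "x \<notin> A"
          thus False using x zeroout unfolding G'_def ind_def by simp
        qed
      qed
      show "{x\<in>V. G' x > 0} \<noteq> A"
      proof
        assume "{x\<in>V. G' x > 0} = A"
        hence "G' xs > 0" using xs(1) by blast
        thus False using xs unfolding G'_def ind_def by simp
      qed
    qed
    have "card {x\<in>V. G' x > 0} < card {x\<in>V. G x > 0}"
      using psubset_card_mono[OF finA sub] unfolding A_def .
    hence IH: "obj G' \<le> M * N G'" using less(1) G'nn G'mono by blast
    have H: "obj ind \<le> M * N ind" unfolding ind_def using HM[OF AF AV] .
    have "obj G = c * obj ind + obj G'" unfolding Geq by (rule objlin)
    also have "\<dots> \<le> c * (M * N ind) + M * N G'" using H IH cpos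
      by (intro add_mono mult_left_mono) auto
    also have "\<dots> = M * (c * N ind + N G')" by (simp add: algebra_simps)
    also have "\<dots> = M * N G" unfolding Geq Nlin ..
    finally show ?thesis .
  qed
qed



lemma obj_scale:
  "lp_objective n S sz q Pi r R (\<lambda>x. c * f x) = c * lp_objective n S sz q Pi r R f"
  unfolding lp_objective_def
  by (simp add: sum_distrib_left distrib_left mult_ac)

theorem mainTheorem7:
  fixes n :: nat and S :: "'a set" and sz :: "'a \<Rightarrow> nat \<Rightarrow> nat"
    and q :: "'a \<Rightarrow> 'a \<Rightarrow> real" and e0 :: 'a
    and Pi :: "'a \<Rightarrow> real" and r :: "'a \<Rightarrow> real" and R :: "'a \<Rightarrow> 'a \<Rightarrow> real"
  assumes "finite S"
    and "queueing_system n S sz q e0"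
    and "assumption1 n S sz q e0"
    and "quasi_reversible n S sz q"
    and "stationary_measure S q Pi"
  shows "\<exists>A. Ferrers n A \<and> A \<subseteq> sz ` S \<and>
           admission_policy n S (det_policy sz A) \<and>
           balanced n S sz (det_policy sz A) \<and>
           (\<forall>\<gamma>. admission_policy n S \<gamma> \<and> balanced n S sz \<gamma> \<longrightarrow>
              (\<forall>P PA. stationary_distribution S (qpol n sz q \<gamma>) P \<longrightarrow>
                 stationary_distribution S (qpol n sz q (det_policy sz A)) PA \<longrightarrow>
                 reward S (qpol n sz q (det_policy sz A)) r R PA
                   \<ge> reward S (qpol n sz q \<gamma>) r R P)) \<and>
           lp_feasible n S sz Pi (GammaA S sz Pi A) \<and>
           (\<forall>\<Gamma>. lp_feasible n S sz Pi \<Gamma> \<longrightarrow>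
              lp_objective n S sz q Pi r R \<Gamma> \<le> lp_objective n S sz q Pi r R (GammaA S sz Pi A))"
proof -
  note fin = assms(1) and qs = assms(2) and a1 = assms(3) and qr = assms(4) and Pi = assms(5)
  define V where "V = sz ` S"
  define obj where "obj = lp_objective n S sz q Pi r R"
  define N where "N f = (\<Sum>s\<in>S. Pi s * f (sz s))" for f :: "(nat \<Rightarrow> nat) \<Rightarrow> real"
  define ZA where "ZA A = (\<Sum>s\<in>{s\<in>S. sz s \<in> A}. Pi s)" for A :: "(nat \<Rightarrow> nat) set"
  define ind where "ind A x = (if x \<in> A then 1 else (0::real))" for A and x :: "nat \<Rightarrow> nat"
  have VF: "Ferrers n V" and e0: "e0 \<in> S" and sze0: "sz e0 = zvec"
    and qn: "\<forall>s\<in>S. \<forall>t\<in>S. s \<noteq> t \<longrightarrow> q s t \<ge> 0"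
    using qs unfolding queueing_system_def V_def by auto
  have finV: "finite V" unfolding V_def using fin by simp
  have pth: "\<forall>s\<in>S. path_from_to S q (\<lambda>u v. sz v \<le> sz u) s e0"
    using a1 unfolding assumption1_def by blast
  have pathq: "\<forall>s\<in>S. path_from_to S q (\<lambda>_ _. True) s e0"
    using pth path_conv[of S q _ _ e0 q] by blast
  have Pinn: "\<forall>s\<in>S. Pi s \<ge> 0" and Pibal: "bal S q Pi" and Pinz: "\<exists>s\<in>S. Pi s \<noteq> 0"
    using Pi unfolding stationary_measure_def bal_def by auto
  have Pie0: "Pi e0 > 0" by (rule e0_pos[OF fin qn Pinn Pibal Pinz pathq])
  have NA: "N (ind A) = ZA A" for A
    unfolding N_def ZA_def ind_def using fin by (simp add: sum.inter_filter if_distrib cong: if_cong)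
  have ZApos: "ZA A > 0" if "zvec \<in> A" for A
  proof -
    have "e0 \<in> {s\<in>S. sz s \<in> A}" using e0 sze0 that by simp
    hence "Pi e0 \<le> ZA A" unfolding ZA_def
      by (rule member_le_sum) (use Pinn fin in auto)
    thus ?thesis using Pie0 by simp
  qed
  have GAeq: "GammaA S sz Pi A = (\<lambda>x. (1 / ZA A) * ind A x)" for A
    unfolding GammaA_def ZA_def ind_def by auto
  have GAeq2: "GammaA S sz Pi A = (\<lambda>x. ind A x / N (ind A))" for A
    unfolding GAeq NA by simp
  define Fam where "Fam = {A. Ferrers n A \<and> A \<subseteq> V}"
  have "Fam \<subseteq> Pow V" unfolding Fam_def by blast
  hence finF: "finite Fam" using finV by (simp add: finite_subset)
  have VFam: "V \<in> Fam" using VF unfolding Fam_def by simp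
  define fo where "fo A = obj (GammaA S sz Pi A)" for A
  define M where "M = Max (fo ` Fam)"
  have "M \<in> fo ` Fam" unfolding M_def using finF VFam by (intro Max_in) auto
  then obtain As where As: "As \<in> Fam" "fo As = M" by (metis imageE)
  have Mge: "fo A \<le> M" if "A \<in> Fam" for A unfolding M_def using finF that by simp
  have AsF: "Ferrers n As" and AsV: "As \<subseteq> V" using As unfolding Fam_def by auto
  have zAs: "zvec \<in> As" using AsF unfolding Ferrers_def by blast
  have HM: "obj (\<lambda>x. if x \<in> A then 1 else 0) \<le> M * N (\<lambda>x. if x \<in> A then 1 else 0)"
    if "Ferrers n A" "A \<subseteq> V" for A
  proof -
    have AF: "A \<in> Fam" using that unfolding Fam_def by simp
    have z: "zvec \<in> A" using that unfolding Ferrers_def by blast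
    have "fo A = (1 / ZA A) * obj (ind A)" unfolding fo_def GAeq obj_def by (rule obj_scale)
    hence "obj (ind A) = ZA A * fo A" using ZApos[OF z] by simp
    also have "\<dots> \<le> ZA A * M" using Mge[OF AF] ZApos[OF z] by simp
    finally show ?thesis using NA[of A] unfolding ind_def by (simp add: mult.commute)
  qed
  have bound: "obj G \<le> M * N G"
    if "\<forall>x\<in>V. G x \<ge> 0" "\<forall>x\<in>V. \<forall>i<n. adde x i \<in> V \<longrightarrow> G (adde x i) \<le> G x" for G
  proof (rule lp_bound[where obj=obj and N=N and M=M and V=V and n=n and G=G, OF finV VF _ _ _ _ HM that])
    show "obj (\<lambda>x. c * f x + g x) = c * obj f + obj g" for c f g unfolding obj_def by (rule obj_lin)
    show "N (\<lambda>x. c * f x + g x) = c * N f + N g" for c f g unfolding N_def by (rule N_lin)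
    show "obj f = 0" if "\<forall>x\<in>V. f x = 0" for f unfolding obj_def using that unfolding V_def by (rule obj_zero)
    show "N f = 0" if "\<forall>x\<in>V. f x = 0" for f unfolding N_def using that unfolding V_def by (rule N_zero)
  qed
  have LP: "obj \<Gamma> \<le> M" if "lp_feasible n S sz Pi \<Gamma>" for \<Gamma>
  proof -
    have "\<forall>x\<in>V. \<Gamma> x \<ge> 0" "\<forall>x\<in>V. \<forall>i<n. adde x i \<in> V \<longrightarrow> \<Gamma> (adde x i) \<le> \<Gamma> x" "N \<Gamma> = 1"
      using that unfolding lp_feasible_def V_def N_def by auto
    thus ?thesis using bound[of \<Gamma>] by simp
  qed
  have downAs: "x \<in> As" if "adde x i \<in> As" for x i
    using AsF that le_adde unfolding Ferrers_def by blast
  have feasAs: "lp_feasible n S sz Pi (GammaA S sz Pi As)"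
    unfolding lp_feasible_def
  proof (intro conjI ballI allI impI)
    fix x assume "x \<in> sz ` S"
    show "GammaA S sz Pi As x \<ge> 0" unfolding GAeq ind_def using ZApos[OF zAs] by simp
  next
    fix x i assume "x \<in> sz ` S" "i < n" "adde x i \<in> sz ` S"
    show "GammaA S sz Pi As (adde x i) \<le> GammaA S sz Pi As x"
      unfolding GAeq ind_def using ZApos[OF zAs] downAs[of x i] by auto
  next
    have "(\<Sum>s\<in>S. Pi s * GammaA S sz Pi As (sz s)) = (1 / ZA As) * N (ind As)"
      unfolding GAeq N_def by (simp add: sum_distrib_left mult_ac)
    thus "(\<Sum>s\<in>S. Pi s * GammaA S sz Pi As (sz s)) = 1" using NA ZApos[OF zAs] by simp
  qed
  have admA: "admission_policy n S (det_policy sz As)"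
    unfolding admission_policy_def det_policy_def by simp
  have GbA: "\<forall>s\<in>S. \<forall>i<n. adde (sz s) i \<in> sz ` S \<longrightarrow> ind As (sz s) * det_policy sz As s i = ind As (adde (sz s) i)"
    unfolding ind_def det_policy_def using downAs by auto
  have indnn: "\<forall>x\<in>sz ` S. ind As x \<ge> 0" unfolding ind_def by simp
  have ind0: "ind As zvec = 1" unfolding ind_def using zAs by simp
  have balA: "balanced n S sz (det_policy sz As)"
    unfolding balanced_def
  proof (intro conjI)
    show "\<forall>s\<in>S. \<forall>t\<in>S. sz s = sz t \<longrightarrow> (\<forall>i<n. det_policy sz As s i = det_policy sz As t i)"
      unfolding det_policy_def by simp
    show "\<exists>\<Gamma>. (\<forall>x\<in>sz ` S. 0 \<le> \<Gamma> x) \<and> \<Gamma> zvec = 1 \<and>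
        (\<forall>s\<in>S. \<forall>i<n. adde (sz s) i \<in> sz ` S \<longrightarrow> \<Gamma> (sz s) * det_policy sz As s i = \<Gamma> (adde (sz s) i))"
      using indnn ind0 GbA by blast
  qed
  have REW: "reward S (qpol n sz q (det_policy sz As)) r R PA \<ge> reward S (qpol n sz q \<gamma>) r R P"
    if adm: "admission_policy n S \<gamma>" and bal: "balanced n S sz \<gamma>"
      and P: "stationary_distribution S (qpol n sz q \<gamma>) P"
      and PA: "stationary_distribution S (qpol n sz q (det_policy sz As)) PA" for \<gamma> P PA
  proof -
    have "\<exists>\<Gamma> :: (nat \<Rightarrow> nat) \<Rightarrow> real. (\<forall>x\<in>sz ` S. 0 \<le> \<Gamma> x) \<and> \<Gamma> zvec = 1 \<and>
      (\<forall>s\<in>S. \<forall>i<n. adde (sz s) i \<in> sz ` S \<longrightarrow> \<Gamma> (sz s) * \<gamma> s i = \<Gamma> (adde (sz s) i))"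
      using bal unfolding balanced_def by (rule conjunct2)
    then obtain \<Gamma> :: "(nat \<Rightarrow> nat) \<Rightarrow> real" where G: "\<forall>x\<in>sz ` S. 0 \<le> \<Gamma> x" "\<Gamma> zvec = 1"
      "\<forall>s\<in>S. \<forall>i<n. adde (sz s) i \<in> sz ` S \<longrightarrow> \<Gamma> (sz s) * \<gamma> s i = \<Gamma> (adde (sz s) i)"
      by (elim exE conjE)
    have r1: "reward S (qpol n sz q \<gamma>) r R P = obj (\<lambda>x. \<Gamma> x / (\<Sum>s\<in>S. Pi s * \<Gamma> (sz s)))"
      and f1: "lp_feasible n S sz Pi (\<lambda>x. \<Gamma> x / (\<Sum>s\<in>S. Pi s * \<Gamma> (sz s)))"
      unfolding obj_def
      by (rule reward_obj(1)[OF fin qs a1 qr Pi adm G P], rule reward_obj(2)[OF fin qs a1 qr Pi adm G P])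
    have r2: "reward S (qpol n sz q (det_policy sz As)) r R PA
        = obj (\<lambda>x. ind As x / (\<Sum>s\<in>S. Pi s * ind As (sz s)))"
      unfolding obj_def by (rule reward_obj(1)[OF fin qs a1 qr Pi admA indnn ind0 GbA PA])
    have "(\<lambda>x. ind As x / (\<Sum>s\<in>S. Pi s * ind As (sz s))) = GammaA S sz Pi As"
      unfolding GAeq2 N_def ..
    hence "reward S (qpol n sz q (det_policy sz As)) r R PA = M"
      using r2 As(2) unfolding fo_def by simp
    moreover have "reward S (qpol n sz q \<gamma>) r R P \<le> M" using r1 LP[OF f1] by simp
    ultimately show ?thesis by simp
  qed
  have "lp_objective n S sz q Pi r R \<Gamma> \<le> lp_objective n S sz q Pi r R (GammaA S sz Pi As)"
    if "lp_feasible n S sz Pi \<Gamma>" for \<Gamma>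
    using LP[OF that] As(2) unfolding fo_def obj_def by simp
  thus ?thesis
    using AsF AsV admA balA REW feasAs unfolding V_def by blast
qed


end
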